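(* For every integer $n\ge 1$, the number of permutations of $\{1,\dots,n\}$ that contain the pattern $321$ exactly once equals $$\frac{3}{n}\binom{2n}{n+3}=\frac{3}{n}\cdot\frac{(2n)!}{(n-3)!\,(n+3)!},$$ where the right-hand side is interpreted as $0$ when $n<3$.
   Context: A permutation $\pi=\pi(1)\pi(2)\cdots\pi(n)$ of $\{1,\dots,n\}$ (written in one-line notation) contains an occurrence of the pattern $321$ at positions $i<j<k$ if $\pi(i)>\pi(j)>\pi(k)$. "Contains the pattern $321$ exactly once" means there is exactly one triple of positions $i<j<k$ with $\pi(i)>\pi(j)>\pi(k)$. A permutation is $321$-avoiding if it has no such triple. *)

theory Defs
  imports Complex_Main "HOL-Combinatorics.Permutations"
begin

definition occ321 :: "nat \<Rightarrow> (nat \<Rightarrow> nat) \<Rightarrow> (nat \<times> nat \<times> nat) set" where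
  "occ321 n p = {(i, j, k). 1 \<le> i \<and> i < j \<and> j < k \<and> k \<le> n \<and> p i > p j \<and> p j > p k}"

end

theory Submission
  imports Defs "HOL-Computational_Algebra.Formal_Power_Series"
begin

function cat :: "nat \<Rightarrow> nat" where
  "cat 0 = 1"
| "cat (Suc n) = (\<Sum>i\<le>n. cat i * cat (n - i))"
  by pat_completeness auto
termination by (relation "measure id") auto

definition cfps :: "nat fps" where "cfps = Abs_fps cat"

lemma cfps_eq: "cfps = 1 + fps_X * cfps ^ 2"
proof (rule fps_ext)
  fix n show "fps_nth cfps n = fps_nth (1 + fps_X * cfps ^ 2) n"
  proof (cases n)
    case 0 then show ?thesis by (simp add: cfps_def)
  next
    case (Suc m)
    have "fps_nth (1 + fps_X * cfps ^ 2) n = fps_nth (cfps * cfps) m"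
      by (simp add: Suc power2_eq_square)
    also have "\<dots> = cat n" by (simp add: Suc fps_mult_nth cfps_def atLeast0AtMost)
    finally show ?thesis by (simp add: cfps_def)
  qed
qed

definition T :: "nat \<Rightarrow> nat \<Rightarrow> nat" where "T k n = fps_nth (cfps ^ k) n"

lemma T_0: "T k 0 = 1"
  by (simp add: T_def fps_nth_power_0 cfps_def)

lemma T_zero_Suc: "T 0 (Suc n) = 0"
  by (simp add: T_def)

lemma T_rec: "k \<ge> 1 \<Longrightarrow> T k (Suc n) = T (k - 1) (Suc n) + T (k + 1) n"
proof -
  assume "k \<ge> 1"
  then obtain j where k: "k = Suc j" by (cases k) auto
  have eq: "cfps ^ Suc j = cfps ^ j + fps_X * cfps ^ (j + 2)"
  proof -
    have "cfps ^ Suc j = cfps ^ j * cfps" by (simp add: power_Suc2 mult.commute)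
    also have "\<dots> = cfps ^ j + fps_X * cfps ^ (j + 2)"
      by (subst (2) cfps_eq) (simp add: algebra_simps power_add power2_eq_square)
    finally show ?thesis .
  qed
  have "fps_nth (cfps ^ Suc j) (Suc n) = fps_nth (cfps ^ j) (Suc n) + fps_nth (cfps ^ (j+2)) n"
    unfolding eq fps_add_nth fps_X_mult_nth by simp
  then show ?thesis using k by (simp add: T_def)
qed

lemma T_conv: "T (a + b) n = (\<Sum>i=0..n. T a i * T b (n - i))"
  by (simp add: T_def power_add fps_mult_nth)

lemma T_closed: "(2 * n + k) * T k n = k * ((2 * n + k) choose n)"
proof (induction n arbitrary: k)
  case 0 then show ?case by (simp add: T_0)
next
  case (Suc n)
  note outer = Suc.IH
  show ?case
  proof (induction k)
    case 0 then show ?case by (simp add: T_zero_Suc)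
  next
    case (Suc k)
    define N where "N = 2 * n + k + 2"
    define T1 where "T1 = T k (Suc n)"
    define T2 where "T2 = T (k + 2) n"
    define B where "B = N choose n"
    define B1 where "B1 = N choose Suc n"
    define B2 where "B2 = Suc N choose Suc n"
    have r: "T (Suc k) (Suc n) = T1 + T2" using T_rec[of "Suc k" n] by (simp add: T1_def T2_def)
    have h1: "N * T1 = k * B1" using Suc.IH unfolding N_def T1_def B1_def
      by (simp add: algebra_simps)
    have h2: "N * T2 = (k + 2) * B" using outer[of "k+2"] unfolding N_def T2_def B_def
      by (simp add: algebra_simps)
    have e: "N = Suc (n + (n + k + 1))" unfolding N_def by simp
    have b1: "Suc n * B1 = Suc (n + k + 1) * B"
      unfolding B1_def B_def e by (rule Suc_times_binomial_add)
    have b2: "Suc n * B2 = Suc N * B"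
      using Suc_times_binomial[of n N] unfolding B2_def B_def by simp
    have "N * Suc n * (Suc N * (T1 + T2)) = Suc N * Suc n * (N * T1) + Suc N * Suc n * (N * T2)"
      by (simp add: algebra_simps)
    also have "\<dots> = Suc N * k * (Suc n * B1) + Suc N * Suc n * ((k + 2) * B)"
      by (simp add: h1 h2 algebra_simps)
    also have "\<dots> = Suc N * k * (Suc (n + k + 1) * B) + Suc N * Suc n * ((k + 2) * B)"
      by (simp only: b1)
    also have "\<dots> = N * Suc k * (Suc N * B)"
      unfolding N_def by (simp add: algebra_simps)
    also have "\<dots> = N * Suc k * (Suc n * B2)"
      by (simp only: b2)
    also have "\<dots> = N * Suc n * (Suc k * B2)"
      by (simp only: ac_simps)
    finally have eqq: "N * Suc n * (Suc N * (T1 + T2)) = N * Suc n * (Suc k * B2)" .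
    have nz: "N * Suc n \<noteq> 0" unfolding N_def by simp
    have "Suc N * (T1 + T2) = Suc k * B2"
      using mult_left_cancel[OF nz] eqq by blast
    then show ?case using r unfolding N_def B2_def by (simp add: algebra_simps)
  qed
qed

definition occ :: "nat list \<Rightarrow> (nat \<times> nat \<times> nat) set" where
  "occ xs = {(i, j, k). i < j \<and> j < k \<and> k < length xs \<and> xs ! j < xs ! i \<and> xs ! k < xs ! j}"

definition av :: "nat list \<Rightarrow> bool" where
  "av xs \<longleftrightarrow> (\<forall>i j k. i < j \<longrightarrow> j < k \<longrightarrow> k < length xs \<longrightarrow> \<not> (xs ! j < xs ! i \<and> xs ! k < xs ! j))"

lemma av_occ: "av xs \<longleftrightarrow> occ xs = {}"
  unfolding av_def occ_def by auto

definition PL :: "nat \<Rightarrow> nat list set" where "PL n = {xs. distinct xs \<and> set xs = {0..<n}}"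
definition AVn :: "nat \<Rightarrow> nat list set" where "AVn n = {xs \<in> PL n. av xs}"
definition Ln :: "nat \<Rightarrow> nat list set" where "Ln n = {xs \<in> AVn n. last xs \<noteq> n - 1}"
definition Rn :: "nat \<Rightarrow> nat list set" where "Rn n = {xs \<in> AVn n. hd xs \<noteq> 0}"
definition On :: "nat \<Rightarrow> nat list set" where "On n = {xs \<in> PL n. card (occ xs) = 1}"

lemma PL_length: "xs \<in> PL n \<Longrightarrow> length xs = n"
  unfolding PL_def using distinct_card[of xs] by auto

lemma finite_PL: "finite (PL n)"
proof -
  have "PL n \<subseteq> {xs. set xs \<subseteq> {0..<n} \<and> length xs = n}"
    using PL_length by (auto simp: PL_def)
  moreover have "finite {xs. set xs \<subseteq> {0..<n} \<and> length xs = n}"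
    by (rule finite_lists_length_eq) simp
  ultimately show ?thesis by (rule finite_subset)
qed

lemma PL_I: "distinct xs \<Longrightarrow> length xs = n \<Longrightarrow> (\<forall>x\<in>set xs. x < n) \<Longrightarrow> xs \<in> PL n"
proof -
  assume d: "distinct xs" and l: "length xs = n" and b: "\<forall>x\<in>set xs. x < n"
  have "set xs \<subseteq> {0..<n}" using b by auto
  moreover have "card (set xs) = card {0..<n}" using d l distinct_card by fastforce
  ultimately have "set xs = {0..<n}" by (simp add: card_subset_eq)
  then show ?thesis using d by (simp add: PL_def)
qed

lemma nth_ins: "t < length A + Suc (length B) \<Longrightarrow>
  (A @ M # B) ! t = (if t < length A then A ! t else if t = length A then M else B ! (t - length A - 1))"
proof -
  have "(A @ M # B) ! t = (if t < length A then A ! t else (M # B) ! (t - length A))"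
    by (simp add: nth_append)
  also have "\<dots> = (if t < length A then A ! t else if t = length A then M else B ! (t - length A - 1))"
    by (cases "t - length A") auto
  finally show ?thesis .
qed

lemma av_insert_max:
  assumes d: "distinct (A @ B)" and m: "\<forall>x\<in>set (A @ B). x < M"
  shows "av (A @ M # B) \<longleftrightarrow> av (A @ B) \<and> sorted_wrt (<) B"
proof
  let ?a = "length A"
  assume av1: "av (A @ M # B)"
  show "av (A @ B) \<and> sorted_wrt (<) B"
  proof
    show "av (A @ B)" unfolding av_def
    proof (intro allI impI notI)
      fix i j k assume ij: "i < j" and jk: "j < k" and k: "k < length (A @ B)"
        and c: "(A @ B) ! j < (A @ B) ! i \<and> (A @ B) ! k < (A @ B) ! j"
      define f where "f t = (if t < ?a then t else Suc t)" for t
      have fe: "t < length (A @ B) \<Longrightarrow> (A @ M # B) ! f t = (A @ B) ! t" for t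
        by (auto simp: f_def nth_append nth_Cons' split: if_splits)
      have "f i < f j" "f j < f k" "f k < length (A @ M # B)" using ij jk k by (auto simp: f_def)
      then have "\<not> ((A @ M # B) ! f j < (A @ M # B) ! f i \<and> (A @ M # B) ! f k < (A @ M # B) ! f j)"
        using av1 unfolding av_def by blast
      moreover have "i < length (A @ B)" "j < length (A @ B)" using ij jk k by auto
      ultimately show False using c fe[of i] fe[of j] fe[of k] k by simp
    qed
    show "sorted_wrt (<) B" unfolding sorted_wrt_iff_nth_less
    proof (intro allI impI)
      fix i j assume ij: "i < j" and j: "j < length B"
      have dB: "distinct B" using d by simp
      have ne: "B ! i \<noteq> B ! j" using dB ij j by (simp add: nth_eq_iff_index_eq)
      show "B ! i < B ! j"
      proof (rule ccontr)
        assume "\<not> B ! i < B ! j"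
        then have lt: "B ! j < B ! i" using ne by simp
        have mi: "B ! i < M" using m ij j by auto
        have "(A @ M # B) ! ?a = M" by simp
        moreover have "(A @ M # B) ! (?a + 1 + i) = B ! i" by (simp add: nth_append)
        moreover have "(A @ M # B) ! (?a + 1 + j) = B ! j" by (simp add: nth_append)
        ultimately show False using av1[unfolded av_def, rule_format, of ?a "?a + 1 + i" "?a + 1 + j"] lt mi ij j
          by simp
      qed
    qed
  qed
next
  let ?a = "length A"
  assume "av (A @ B) \<and> sorted_wrt (<) B"
  then have av2: "av (A @ B)" and sB: "sorted_wrt (<) B" by auto
  show "av (A @ M # B)" unfolding av_def
  proof (intro allI impI notI)
    fix i j k assume ij: "i < j" and jk: "j < k" and k: "k < length (A @ M # B)"
      and c: "(A @ M # B) ! j < (A @ M # B) ! i \<and> (A @ M # B) ! k < (A @ M # B) ! j"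
    have kk: "k < ?a + Suc (length B)" using k by simp
    have lt: "t < length (A @ M # B) \<Longrightarrow> t \<noteq> ?a \<Longrightarrow> (A @ M # B) ! t < M" for t
      using m by (auto simp: nth_append nth_Cons' split: if_splits)
    consider "j = ?a" | "k = ?a" | "i = ?a" | "i \<noteq> ?a" "j \<noteq> ?a" "k \<noteq> ?a" by blast
    then show False
    proof cases
      case 1 then show ?thesis using c lt[of i] ij jk k by auto
    next
      case 2 then show ?thesis using c lt[of j] ij jk k by auto
    next
      case 3
      have "B ! (j - ?a - 1) < B ! (k - ?a - 1)"
        using sB 3 ij jk kk unfolding sorted_wrt_iff_nth_less by auto
      moreover have "(A @ M # B) ! j = B ! (j - ?a - 1)" "(A @ M # B) ! k = B ! (k - ?a - 1)"
        using 3 ij jk kk by (auto simp: nth_ins)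
      ultimately show ?thesis using c by auto
    next
      case 4
      define e where "e t = (if t < ?a then t else t - 1)" for t
      have ee: "t < length (A @ M # B) \<Longrightarrow> t \<noteq> ?a \<Longrightarrow> (A @ B) ! e t = (A @ M # B) ! t" for t
        by (auto simp: e_def nth_append nth_Cons' split: if_splits)
      have "e i < e j" "e j < e k" "e k < length (A @ B)" using ij jk k 4 by (auto simp: e_def)
      then have "\<not> ((A @ B) ! e j < (A @ B) ! e i \<and> (A @ B) ! e k < (A @ B) ! e j)"
        using av2 unfolding av_def by blast
      moreover have "i < length (A @ M # B)" "j < length (A @ M # B)" using ij jk k by auto
      ultimately show False using c ee[of i] ee[of j] ee[of k] k 4 by simp
    qed
  qed
qed

lemma av_cons_min:
  assumes m: "\<forall>x\<in>set xs. m < x"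
  shows "av (m # xs) \<longleftrightarrow> av xs"
proof
  assume a: "av (m # xs)"
  show "av xs" unfolding av_def
  proof (intro allI impI notI)
    fix i j k assume "i < j" "j < k" "k < length xs" "xs ! j < xs ! i \<and> xs ! k < xs ! j"
    then show False using a[unfolded av_def, rule_format, of "Suc i" "Suc j" "Suc k"] by simp
  qed
next
  assume a: "av xs"
  show "av (m # xs)" unfolding av_def
  proof (intro allI impI notI)
    fix i j k assume ij: "i < j" and jk: "j < k" and k: "k < length (m # xs)"
      and c: "(m # xs) ! j < (m # xs) ! i \<and> (m # xs) ! k < (m # xs) ! j"
    show False
    proof (cases i)
      case 0
      then have "(m # xs) ! j = xs ! (j - 1)" using ij by (cases j) auto
      moreover have "xs ! (j - 1) \<in> set xs" using ij jk k by simp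
      ultimately show False using c m 0 by fastforce
    next
      case (Suc i')
      then obtain j' k' where "j = Suc j'" "k = Suc k'" using ij jk by (cases j; cases k) auto
      then show False using a[unfolded av_def, rule_format, of i' j' k'] ij jk k c Suc by simp
    qed
  qed
qed

lemma av_map:
  assumes f: "\<forall>x\<in>set xs. \<forall>y\<in>set xs. f x < f y \<longleftrightarrow> x < y"
  shows "av (map f xs) \<longleftrightarrow> av xs"
proof -
  have "xs ! j < xs ! i \<and> xs ! k < xs ! j \<longleftrightarrow> f (xs ! j) < f (xs ! i) \<and> f (xs ! k) < f (xs ! j)"
    if "i < j" "j < k" "k < length xs" for i j k
    using f that by auto
  then show ?thesis unfolding av_def by auto
qed

definition run :: "nat list \<Rightarrow> nat" where
  "run xs = (GREATEST k. k \<le> length xs \<and> sorted_wrt (<) (drop (length xs - k) xs))"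

lemma run_props: "run xs \<le> length xs \<and> sorted_wrt (<) (drop (length xs - run xs) xs)"
proof -
  let ?P = "\<lambda>k. k \<le> length xs \<and> sorted_wrt (<) (drop (length xs - k) xs)"
  have "?P 0" by simp
  then have "?P (Greatest ?P)" by (rule GreatestI_nat[where b = "length xs"]) auto
  then show ?thesis unfolding run_def .
qed

lemma run_le: "run xs \<le> length xs" using run_props by blast

lemma run_iff: "k \<le> length xs \<Longrightarrow> k \<le> run xs \<longleftrightarrow> sorted_wrt (<) (drop (length xs - k) xs)"
proof
  assume k: "k \<le> length xs" and kr: "k \<le> run xs"
  have s: "sorted_wrt (<) (drop (length xs - run xs) xs)" using run_props by blast
  have eq: "drop (length xs - k) xs = drop (run xs - k) (drop (length xs - run xs) xs)"
    using kr run_le[of xs] by (simp add: add.commute)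
  show "sorted_wrt (<) (drop (length xs - k) xs)" unfolding eq by (rule sorted_wrt_drop) (rule s)
next
  assume k: "k \<le> length xs" and s: "sorted_wrt (<) (drop (length xs - k) xs)"
  show "k \<le> run xs" unfolding run_def
    by (rule Greatest_le_nat[where b = "length xs"]) (use k s in auto)
qed

lemma run_eqI: "r \<le> length xs \<Longrightarrow> (\<And>k. k \<le> length xs \<Longrightarrow> k \<le> r \<longleftrightarrow> sorted_wrt (<) (drop (length xs - k) xs)) \<Longrightarrow> run xs = r"
  by (metis run_iff run_le le_antisym order_refl)

lemma run_Nil: "run [] = 0" using run_le[of "[]"] by simp

lemma run_pos: "xs \<noteq> [] \<Longrightarrow> 1 \<le> run xs"
proof -
  assume "xs \<noteq> []"
  then have "1 \<le> length xs" by (cases xs) auto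
  moreover have "sorted_wrt (<) (drop (length xs - 1) xs)"
    using \<open>xs \<noteq> []\<close> by (cases xs rule: rev_cases) auto
  ultimately show ?thesis using run_iff by blast
qed

lemma run_snoc:
  assumes m: "\<forall>y\<in>set ys. y < M"
  shows "run (ys @ [M]) = Suc (run ys)"
proof (rule run_eqI)
  show "Suc (run ys) \<le> length (ys @ [M])" using run_le[of ys] by simp
  fix k assume k: "k \<le> length (ys @ [M])"
  show "k \<le> Suc (run ys) \<longleftrightarrow> sorted_wrt (<) (drop (length (ys @ [M]) - k) (ys @ [M]))"
  proof (cases k)
    case 0 then show ?thesis by simp
  next
    case (Suc k')
    then have k': "k' \<le> length ys" using k by simp
    have "drop (length (ys @ [M]) - k) (ys @ [M]) = drop (length ys - k') ys @ [M]"
      using Suc k' by simp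
    moreover have "sorted_wrt (<) (drop (length ys - k') ys @ [M]) \<longleftrightarrow> sorted_wrt (<) (drop (length ys - k') ys)"
      using m by (auto simp: sorted_wrt_append dest: in_set_dropD)
    ultimately show ?thesis using run_iff[OF k'] Suc by simp
  qed
qed

lemma run_ins:
  assumes ne: "B \<noteq> []" and s: "sorted_wrt (<) B" and m: "\<forall>y\<in>set B. y < M"
  shows "run (A @ M # B) = length B"
proof (rule run_eqI)
  show "length B \<le> length (A @ M # B)" by simp
  fix k assume k: "k \<le> length (A @ M # B)"
  show "k \<le> length B \<longleftrightarrow> sorted_wrt (<) (drop (length (A @ M # B) - k) (A @ M # B))"
  proof
    assume "k \<le> length B"
    then have "drop (length (A @ M # B) - k) (A @ M # B) = drop (length B - k) B"
      by (simp add: Suc_diff_le)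
    then show "sorted_wrt (<) (drop (length (A @ M # B) - k) (A @ M # B))"
      using s by (simp add: sorted_wrt_drop)
  next
    assume ss: "sorted_wrt (<) (drop (length (A @ M # B) - k) (A @ M # B))"
    show "k \<le> length B"
    proof (rule ccontr)
      assume "\<not> k \<le> length B"
      then have "drop (length (A @ M # B) - k) (A @ M # B) = drop (length A - (k - Suc (length B))) A @ M # B"
        using k by simp
      then have "sorted_wrt (<) (M # B)" using ss by (simp add: sorted_wrt_append)
      then show False using ne m by (cases B) auto
    qed
  qed
qed


definition g :: "nat \<Rightarrow> nat \<Rightarrow> nat" where "g m r = card {xs \<in> AVn m. run xs = r}"
definition G :: "nat \<Rightarrow> nat \<Rightarrow> nat" where "G m j = card {xs \<in> AVn m. j \<le> run xs}"

lemma finite_AVn: "finite (AVn m)"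
  unfolding AVn_def using finite_PL by simp

lemma PL_split:
  assumes "xs \<in> PL (Suc m)"
  obtains A B where "xs = A @ m # B" "A @ B \<in> PL m" "m \<notin> set A" "m \<notin> set B"
proof -
  have "m \<in> set xs" using assms by (simp add: PL_def)
  then obtain A B where xs: "xs = A @ m # B" by (meson split_list)
  have d: "distinct (A @ m # B)" using assms xs by (simp add: PL_def)
  then have "m \<notin> set A" "m \<notin> set B" by auto
  moreover have "set (A @ B) = {0..<m}"
  proof -
    have "set (A @ m # B) = {0..<Suc m}" using assms xs by (simp add: PL_def)
    then have ins: "insert m (set (A @ B)) = {0..<Suc m}" by simp
    have nm: "m \<notin> set (A @ B)" using \<open>m \<notin> set A\<close> \<open>m \<notin> set B\<close> by simp
    show ?thesis
    proof (rule set_eqI)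
      fix x
      have "x \<in> insert m (set (A @ B)) \<longleftrightarrow> x < Suc m" using ins by (metis atLeastLessThan_iff zero_le)
      then show "x \<in> set (A @ B) \<longleftrightarrow> x \<in> {0..<m}" using nm by (cases "x = m") auto
    qed
  qed
  ultimately show ?thesis using that[OF xs] d by (simp add: PL_def)
qed

lemma PL_join:
  assumes "A @ B \<in> PL m"
  shows "A @ m # B \<in> PL (Suc m)"
  using assms by (auto simp: PL_def)

definition insm :: "nat \<Rightarrow> nat \<Rightarrow> nat list \<Rightarrow> nat list" where
  "insm m r ys = (let k = (if r = Suc (run ys) then 0 else r) in take (m - k) ys @ m # drop (m - k) ys)"

lemma g_bij:
  assumes r: "1 \<le> r"
  shows "g (Suc m) r = G m (r - 1)"
proof -
  let ?X = "{xs \<in> AVn (Suc m). run xs = r}"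
  let ?Y = "{ys \<in> AVn m. r - 1 \<le> run ys}"
  have "bij_betw (removeAll m) ?X ?Y"
  proof (rule bij_betw_byWitness[where f' = "insm m r"])
    show "\<forall>xs\<in>?X. insm m r (removeAll m xs) = xs"
    proof
      fix xs assume xs: "xs \<in> ?X"
      then have pl: "xs \<in> PL (Suc m)" and a: "av xs" and rx: "run xs = r" by (auto simp: AVn_def)
      obtain A B where e: "xs = A @ m # B" "A @ B \<in> PL m" "m \<notin> set A" "m \<notin> set B"
        using PL_split[OF pl] by blast
      have rm: "removeAll m xs = A @ B" using e by simp
      have mx: "\<forall>x\<in>set (A @ B). x < m" using e(2) by (auto simp: PL_def)
      have dAB: "distinct (A @ B)" using e(2) by (simp add: PL_def)
      have sB: "sorted_wrt (<) B" using av_insert_max[OF dAB mx] a e(1) by simp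
      have lAB: "length (A @ B) = m" using PL_length[OF e(2)] .
      show "insm m r (removeAll m xs) = xs"
      proof (cases "B = []")
        case True
        then have "run xs = Suc (run A)" using e(1) run_snoc[of A m] mx by simp
        then have "r = Suc (run (A @ B))" using rx True by simp
        then show ?thesis unfolding rm insm_def using True e(1) lAB by simp
      next
        case False
        have "run xs = length B" using e(1) run_ins[OF False sB] mx by simp
        then have rB: "r = length B" using rx by simp
        have "length B \<le> run (A @ B)"
          using run_iff[of "length B" "A @ B"] sB by simp
        then have "r \<noteq> Suc (run (A @ B))" using rB by simp
        then show ?thesis unfolding rm insm_def using rB e(1) lAB by simp
      qed
    qed
    show "\<forall>ys\<in>?Y. removeAll m (insm m r ys) = ys"
    proof
      fix ys assume "ys \<in> ?Y"
      then have "m \<notin> set ys" by (auto simp: AVn_def PL_def)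
      have "removeAll m (take t ys @ m # drop t ys) = ys" for t
      proof -
        have "m \<notin> set (take t ys)" "m \<notin> set (drop t ys)"
          using \<open>m \<notin> set ys\<close> by (auto dest: in_set_takeD in_set_dropD)
        then show ?thesis by (simp add: removeAll_id)
      qed
      then show "removeAll m (insm m r ys) = ys" unfolding insm_def Let_def by simp
    qed
    show "removeAll m ` ?X \<subseteq> ?Y"
    proof
      fix ys assume "ys \<in> removeAll m ` ?X"
      then obtain xs where xs: "xs \<in> ?X" and ys: "ys = removeAll m xs" by blast
      then have pl: "xs \<in> PL (Suc m)" and a: "av xs" and rx: "run xs = r" by (auto simp: AVn_def)
      obtain A B where e: "xs = A @ m # B" "A @ B \<in> PL m" "m \<notin> set A" "m \<notin> set B"
        using PL_split[OF pl] by blast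
      have rm: "ys = A @ B" using e ys by simp
      have mx: "\<forall>x\<in>set (A @ B). x < m" using e(2) by (auto simp: PL_def)
      have dAB: "distinct (A @ B)" using e(2) by (simp add: PL_def)
      have avAB: "av (A @ B)" and sB: "sorted_wrt (<) B" using av_insert_max[OF dAB mx] a e(1) by simp_all
      have "r - 1 \<le> run (A @ B)"
      proof (cases "B = []")
        case True
        then have "run xs = Suc (run A)" using e(1) run_snoc[of A m] mx by simp
        then show ?thesis using rx True by simp
      next
        case False
        have "run xs = length B" using e(1) run_ins[OF False sB] mx by simp
        moreover have "length B \<le> run (A @ B)"
          using run_iff[of "length B" "A @ B"] sB by simp
        ultimately show ?thesis using rx by simp
      qed
      then show "ys \<in> ?Y" using rm e(2) avAB by (simp add: AVn_def)
    qed
    show "insm m r ` ?Y \<subseteq> ?X"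
    proof
      fix xs assume "xs \<in> insm m r ` ?Y"
      then obtain ys where ys: "ys \<in> ?Y" and xs: "xs = insm m r ys" by blast
      then have pl: "ys \<in> PL m" and a: "av ys" and rr: "r - 1 \<le> run ys" by (auto simp: AVn_def)
      have ly: "length ys = m" using PL_length[OF pl] .
      define k where "k = (if r = Suc (run ys) then 0 else r)"
      have kr: "k \<le> run ys" using rr r unfolding k_def by auto
      then have km: "k \<le> m" using run_le[of ys] ly by simp
      define A where "A = take (m - k) ys"
      define B where "B = drop (m - k) ys"
      have ys_eq: "ys = A @ B" unfolding A_def B_def by simp
      have lB: "length B = k" unfolding B_def using ly km by simp
      have sB: "sorted_wrt (<) B" unfolding B_def using run_iff[of k ys] kr km ly by simp
      have xs_eq: "xs = A @ m # B" unfolding xs insm_def Let_def A_def B_def k_def by simp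
      have mx: "\<forall>x\<in>set (A @ B). x < m" using pl ys_eq by (auto simp: PL_def)
      have dAB: "distinct (A @ B)" using pl ys_eq by (simp add: PL_def)
      have avx: "av xs" using av_insert_max[OF dAB mx] a sB xs_eq ys_eq by simp
      have plx: "xs \<in> PL (Suc m)" using PL_join[of A B m] pl ys_eq xs_eq by simp
      have "run xs = r"
      proof (cases "r = Suc (run ys)")
        case True
        then have "B = []" using lB k_def by simp
        then show ?thesis using xs_eq run_snoc[of A m] mx True ys_eq by simp
      next
        case False
        then have "k = r" unfolding k_def by simp
        then have "B \<noteq> []" using lB r by auto
        then show ?thesis using xs_eq run_ins[OF _ sB] mx lB \<open>k = r\<close> by simp
      qed
      then show "xs \<in> ?X" using avx plx by (simp add: AVn_def)
    qed
  qed
  then show ?thesis unfolding g_def G_def by (rule bij_betw_same_card)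
qed

lemma G_split: "G m j = g m j + G m (Suc j)"
proof -
  have "{xs \<in> AVn m. j \<le> run xs} = {xs \<in> AVn m. run xs = j} \<union> {xs \<in> AVn m. Suc j \<le> run xs}"
    by auto
  moreover have "finite {xs \<in> AVn m. run xs = j}" "finite {xs \<in> AVn m. Suc j \<le> run xs}"
    using finite_AVn by auto
  ultimately show ?thesis unfolding G_def g_def by (simp add: card_Un_disjoint disjoint_iff)
qed

lemma g_rec: "1 \<le> r \<Longrightarrow> g (Suc m) r = g m (r - 1) + g (Suc m) (Suc r)"
  using g_bij[of r m] g_bij[of "Suc r" m] G_split[of m "r - 1"] by simp

lemma g_big: "m < r \<Longrightarrow> g m r = 0"
proof -
  assume "m < r"
  have "{xs \<in> AVn m. run xs = r} = {}"
  proof (rule equals0I)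
    fix xs assume "xs \<in> {xs \<in> AVn m. run xs = r}"
    then have "xs \<in> AVn m" "run xs = r" by auto
    then have "length xs = m" using PL_length by (auto simp: AVn_def)
    then show False using run_le[of xs] \<open>run xs = r\<close> \<open>m < r\<close> by simp
  qed
  then show ?thesis unfolding g_def by (metis card.empty)
qed

lemma PL_0: "PL 0 = {[]}" by (auto simp: PL_def)

lemma g_00: "g 0 0 = 1"
proof -
  have "{xs \<in> AVn 0. run xs = 0} = {[]}" by (auto simp: AVn_def PL_0 run_Nil av_def)
  then show ?thesis unfolding g_def by simp
qed

lemma g_m0: "1 \<le> m \<Longrightarrow> g m 0 = 0"
proof -
  assume m: "1 \<le> m"
  have "{xs \<in> AVn m. run xs = 0} = {}"
  proof (rule equals0I)
    fix xs assume "xs \<in> {xs \<in> AVn m. run xs = 0}"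
    then have "xs \<in> AVn m" "run xs = 0" by auto
    then have "length xs = m" using PL_length by (auto simp: AVn_def)
    then have "xs \<noteq> []" using m by auto
    then show False using run_pos \<open>run xs = 0\<close> by fastforce
  qed
  then show ?thesis unfolding g_def by (metis card.empty)
qed

lemma g_T: "g (r + n) r = T r n"
proof (induction n arbitrary: r)
  case 0
  show ?case
  proof (induction r)
    case 0 then show ?case by (simp add: g_00 T_0)
  next
    case (Suc r)
    have "g (Suc r) (Suc r) = g r r + g (Suc r) (Suc (Suc r))" using g_rec[of "Suc r" r] by simp
    then show ?case using Suc g_big[of "Suc r" "Suc (Suc r)"] by (simp add: T_0)
  qed
next
  case (Suc n)
  note outer = Suc.IH
  show ?case
  proof (induction r)
    case 0 then show ?case using g_m0[of "Suc n"] T_zero_Suc by simp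
  next
    case (Suc r)
    have "g (Suc (r + Suc n)) (Suc r) = g (r + Suc n) r + g (Suc (r + Suc n)) (Suc (Suc r))"
      using g_rec[of "Suc r" "r + Suc n"] by simp
    also have "g (r + Suc n) r = T r (Suc n)" using Suc.IH .
    also have "g (Suc (r + Suc n)) (Suc (Suc r)) = T (Suc (Suc r)) n"
      using outer[of "Suc (Suc r)"] by simp
    finally show ?case using T_rec[of "Suc r" n] by simp
  qed
qed

lemma card_AVn: "card (AVn m) = T 1 m"
proof -
  have "card (AVn m) = G m 0" unfolding G_def by simp
  also have "\<dots> = g (Suc m) 1" using g_bij[of 1 m] by simp
  also have "\<dots> = T 1 m" using g_T[of 1 m] by simp
  finally show ?thesis .
qed

lemma card_split_bij:
  assumes fin: "finite X" and bij: "bij_betw f {x \<in> X. P x} Y"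
  shows "card {x \<in> X. \<not> P x} + card Y = card X"
proof -
  have "X = {x \<in> X. \<not> P x} \<union> {x \<in> X. P x}" by auto
  moreover have "card ({x \<in> X. \<not> P x} \<union> {x \<in> X. P x}) = card {x \<in> X. \<not> P x} + card {x \<in> X. P x}"
    using fin by (intro card_Un_disjoint) auto
  moreover have "card {x \<in> X. P x} = card Y" using bij by (rule bij_betw_same_card)
  ultimately show ?thesis by simp
qed

lemma card_Ln: "card (Ln (Suc m)) + card (AVn m) = card (AVn (Suc m))"
proof -
  let ?P = "\<lambda>xs. last xs = m"
  have "bij_betw butlast {xs \<in> AVn (Suc m). ?P xs} (AVn m)"
  proof (rule bij_betw_byWitness[where f' = "\<lambda>ys. ys @ [m]"])
    have key: "xs \<in> AVn (Suc m) \<Longrightarrow> last xs = m \<Longrightarrow> xs = butlast xs @ [m] \<and> butlast xs \<in> AVn m" for xs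
    proof -
      assume xs: "xs \<in> AVn (Suc m)" and l: "last xs = m"
      then have pl: "xs \<in> PL (Suc m)" and a: "av xs" by (auto simp: AVn_def)
      obtain A B where e: "xs = A @ m # B" "A @ B \<in> PL m" "m \<notin> set A" "m \<notin> set B"
        using PL_split[OF pl] by blast
      have "B = []"
      proof (rule ccontr)
        assume "B \<noteq> []"
        then have "last xs \<in> set B" using e(1) by simp
        then show False using l e(4) by simp
      qed
      then have xs_eq: "xs = A @ [m]" using e by simp
      have mx: "\<forall>x\<in>set (A @ []). x < m" using e(2) \<open>B = []\<close> by (auto simp: PL_def)
      have dA: "distinct (A @ [])" using e(2) \<open>B = []\<close> by (simp add: PL_def)
      have "av A" using av_insert_max[OF dA mx] a xs_eq by simp
      then show ?thesis using xs_eq e(2) \<open>B = []\<close> by (simp add: AVn_def)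
    qed
    show "\<forall>xs\<in>{xs \<in> AVn (Suc m). ?P xs}. butlast xs @ [m] = xs" using key by auto
    show "\<forall>ys\<in>AVn m. butlast (ys @ [m]) = ys" by simp
    show "butlast ` {xs \<in> AVn (Suc m). ?P xs} \<subseteq> AVn m" using key by auto
    show "(\<lambda>ys. ys @ [m]) ` AVn m \<subseteq> {xs \<in> AVn (Suc m). ?P xs}"
    proof
      fix xs assume "xs \<in> (\<lambda>ys. ys @ [m]) ` AVn m"
      then obtain ys where ys: "ys \<in> AVn m" and xs: "xs = ys @ [m]" by blast
      then have pl: "ys \<in> PL m" and a: "av ys" by (auto simp: AVn_def)
      have mx: "\<forall>x\<in>set (ys @ []). x < m" using pl by (auto simp: PL_def)
      have d: "distinct (ys @ [])" using pl by (simp add: PL_def)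
      have "av (ys @ [m])" using av_insert_max[OF d mx] a by simp
      moreover have "ys @ [m] \<in> PL (Suc m)" using PL_join[of ys "[]" m] pl by simp
      ultimately show "xs \<in> {xs \<in> AVn (Suc m). ?P xs}" using xs by (simp add: AVn_def)
    qed
  qed
  from card_split_bij[OF finite_AVn this] show ?thesis by (simp add: Ln_def)
qed

lemma card_Rn: "card (Rn (Suc m)) + card (AVn m) = card (AVn (Suc m))"
proof -
  let ?P = "\<lambda>xs. hd xs = (0::nat)"
  let ?f = "\<lambda>xs. map (\<lambda>v. v - 1) (tl xs)"
  let ?h = "\<lambda>ys. 0 # map Suc ys"
  have hprop: "ys \<in> AVn m \<Longrightarrow> ?h ys \<in> AVn (Suc m)" for ys
  proof -
    assume "ys \<in> AVn m"
    then have pl: "ys \<in> PL m" and a: "av ys" by (auto simp: AVn_def)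
    have "av (map Suc ys)" using av_map[of ys Suc] a by simp
    then have "av (?h ys)" using av_cons_min[of "map Suc ys" 0] by simp
    moreover have "?h ys \<in> PL (Suc m)"
      using pl PL_length[OF pl] by (intro PL_I) (auto simp: PL_def distinct_map)
    ultimately show ?thesis by (simp add: AVn_def)
  qed
  have key: "xs \<in> AVn (Suc m) \<Longrightarrow> hd xs = 0 \<Longrightarrow> xs = ?h (?f xs) \<and> ?f xs \<in> AVn m" for xs
  proof -
    assume xs: "xs \<in> AVn (Suc m)" and h: "hd xs = 0"
    then have pl: "xs \<in> PL (Suc m)" and a: "av xs" by (auto simp: AVn_def)
    have "xs \<noteq> []" using PL_length[OF pl] by auto
    then have xs_eq: "xs = 0 # tl xs" using h by (cases xs) auto
    have d: "distinct (0 # tl xs)" using pl xs_eq by (simp add: PL_def)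
    have st: "set (0 # tl xs) = {0..<Suc m}" using pl xs_eq by (simp add: PL_def)
    have pos: "\<forall>x\<in>set (tl xs). 0 < x" using d by (auto intro: gr0I)
    have lt: "\<forall>x\<in>set (tl xs). x < Suc m" using st by auto
    have eq1: "?h (?f xs) = xs"
    proof -
      have "map Suc (map (\<lambda>v. v - 1) (tl xs)) = tl xs"
        using pos by (induction "tl xs" arbitrary: xs) (auto simp: map_idI)
      then show ?thesis using xs_eq by (metis list.simps(9))
    qed
    have "av (tl xs)" using av_cons_min[of "tl xs" 0] pos a xs_eq by simp
    moreover have "\<forall>x\<in>set (tl xs). \<forall>y\<in>set (tl xs). (x - 1 < y - 1) = (x < y)"
      using pos by auto
    ultimately have av2: "av (?f xs)" using av_map[of "tl xs" "\<lambda>v. v - 1"] by blast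
    have "distinct (?f xs)"
      using d pos by (auto simp: distinct_map inj_on_def) (metis Suc_pred)
    moreover have "length (?f xs) = m" using PL_length[OF pl] by simp
    moreover have "\<forall>x\<in>set (?f xs). x < m" using lt pos by auto
    ultimately have "?f xs \<in> PL m" by (rule PL_I)
    then show ?thesis using eq1 av2 by (simp add: AVn_def)
  qed
  have "bij_betw ?f {xs \<in> AVn (Suc m). ?P xs} (AVn m)"
  proof (rule bij_betw_byWitness[where f' = ?h])
    show "\<forall>xs\<in>{xs \<in> AVn (Suc m). ?P xs}. ?h (?f xs) = xs" using key by auto
    show "\<forall>ys\<in>AVn m. ?f (?h ys) = ys" by (simp add: map_idI)
    show "?f ` {xs \<in> AVn (Suc m). ?P xs} \<subseteq> AVn m" using key by auto
    show "?h ` AVn m \<subseteq> {xs \<in> AVn (Suc m). ?P xs}" using hprop by auto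
  qed
  from card_split_bij[OF finite_AVn this] show ?thesis by (simp add: Rn_def)
qed

lemma T1_Suc: "T 1 (Suc n) = T 2 n" using T_rec[of 1 n] T_zero_Suc by (simp add: numeral_2_eq_2)

lemma card_Ln_T: "card (Ln (Suc (Suc j))) = T 3 j"
proof -
  have "T 1 (Suc (Suc j)) = T 1 (Suc j) + T 3 j"
    using T1_Suc[of "Suc j"] T_rec[of 2 j] by simp
  then show ?thesis using card_Ln[of "Suc j"] card_AVn by simp
qed

lemma card_Rn_T: "card (Rn (Suc (Suc j))) = T 3 j"
proof -
  have "T 1 (Suc (Suc j)) = T 1 (Suc j) + T 3 j"
    using T1_Suc[of "Suc j"] T_rec[of 2 j] by simp
  then show ?thesis using card_Rn[of "Suc j"] card_AVn by simp
qed

definition bld :: "nat \<Rightarrow> nat list \<Rightarrow> nat list \<Rightarrow> nat list" where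
  "bld s l r = map (\<lambda>v. if v = s then hd r + s else v) (butlast l) @ s #
               map (\<lambda>v. if v = 0 then last l else v + s) (tl r)"

lemma bld_length: "length l = Suc s \<Longrightarrow> length r = n - s \<Longrightarrow> s < n \<Longrightarrow> length (bld s l r) = n"
  unfolding bld_def by simp

lemma bld_nth:
  assumes ll: "length l = Suc s" and lr: "length r = n - s" and sn: "s < n" and i: "i < n"
  shows "bld s l r ! i = (if i < s then (if l ! i = s then hd r + s else l ! i)
                          else if i = s then s
                          else (if r ! (i - s) = 0 then last l else r ! (i - s) + s))"
proof -
  let ?A = "map (\<lambda>v. if v = s then hd r + s else v) (butlast l)"
  let ?B = "map (\<lambda>v. if v = 0 then last l else v + s) (tl r)"
  have lA: "length ?A = s" using ll by simp
  have lB: "length ?B = n - s - 1" using lr by simp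
  have "bld s l r ! i = (if i < length ?A then ?A ! i else if i = length ?A then s else ?B ! (i - length ?A - 1))"
    unfolding bld_def by (rule nth_ins) (use lA lB i sn in simp)
  also have "\<dots> = (if i < s then (if l ! i = s then hd r + s else l ! i)
                          else if i = s then s
                          else (if r ! (i - s) = 0 then last l else r ! (i - s) + s))"
  proof -
    have "i < s \<Longrightarrow> ?A ! i = (if l ! i = s then hd r + s else l ! i)"
      using ll by (simp add: nth_butlast)
    moreover have "s < i \<Longrightarrow> ?B ! (i - s - 1) = (if r ! (i - s) = 0 then last l else r ! (i - s) + s)"
      using lr i by (simp add: nth_tl Suc_diff_Suc)
    ultimately show ?thesis using lA by auto
  qed
  finally show ?thesis .
qed


lemma bld_props:
  assumes s1: "1 \<le> s" and sn: "s + 2 \<le> n" and L: "l \<in> Ln (Suc s)" and R: "r \<in> Rn (n - s)"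
  shows "bld s l r \<in> PL n \<and> (\<exists>i0 k0. occ (bld s l r) = {(i0, s, k0)} \<and> bld s l r ! i0 = hd r + s \<and> bld s l r ! k0 = last l)"
proof -
  have dl: "distinct l" and sl: "set l = {0..<Suc s}" and avl: "av l" and la: "last l \<noteq> s"
    using L by (auto simp: Ln_def AVn_def PL_def)
  have ll: "length l = Suc s" using L PL_length by (auto simp: Ln_def AVn_def)
  have dr: "distinct r" and sr: "set r = {0..<n - s}" and avr: "av r" and hr: "hd r \<noteq> 0"
    using R by (auto simp: Rn_def AVn_def PL_def)
  have lr: "length r = n - s" using R PL_length by (auto simp: Rn_def AVn_def)
  define a where "a = last l"
  define c where "c = hd r + s"
  have lne: "l \<noteq> []" using ll by auto
  have las: "l ! s = a" unfolding a_def using last_conv_nth[OF lne] ll by simp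
  have "a \<in> set l" unfolding a_def using ll by (metis last_in_set list.size(3) nat.distinct(1))
  then have a_lt: "a < s" using sl la a_def by auto
  have rne: "r \<noteq> []" using lr sn by auto
  have r0: "r ! 0 = hd r" using rne by (simp add: hd_conv_nth)
  have "hd r \<in> set r" using rne by simp
  then have hr_lt: "hd r < n - s" using sr by auto
  have c_gt: "s < c" using hr unfolding c_def by simp
  have c_lt: "c < n" using hr_lt sn unfolding c_def by simp
  have lval: "t < Suc s \<Longrightarrow> l ! t \<le> s" for t using sl ll by (metis atLeastLessThan_iff less_Suc_eq_le nth_mem)
  have linj: "t < Suc s \<Longrightarrow> u < Suc s \<Longrightarrow> l ! t = l ! u \<Longrightarrow> t = u" for t u
    using dl ll by (simp add: nth_eq_iff_index_eq)
  have rval: "t < n - s \<Longrightarrow> r ! t < n - s" for t using sr lr by (metis atLeastLessThan_iff nth_mem)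
  have rinj: "t < n - s \<Longrightarrow> u < n - s \<Longrightarrow> r ! t = r ! u \<Longrightarrow> t = u" for t u
    using dr lr by (simp add: nth_eq_iff_index_eq)
  have "s \<in> set l" using sl by simp
  then obtain i0 where i0': "i0 < Suc s" "l ! i0 = s" using ll by (auto simp: in_set_conv_nth)
  have i0: "i0 < s" using i0' las la a_def by (metis less_Suc_eq)
  have "0 \<in> set r" using sr sn by simp
  then obtain j0 where j0': "j0 < n - s" "r ! j0 = 0" using lr by (auto simp: in_set_conv_nth)
  have j0: "0 < j0" using j0' r0 hr by (metis gr0I)
  define P where "P = bld s l r"
  have lP: "length P = n" unfolding P_def using bld_length ll lr sn by simp
  have Pn: "t < n \<Longrightarrow> P ! t = (if t < s then (if l ! t = s then c else l ! t)
                          else if t = s then s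
                          else (if r ! (t - s) = 0 then a else r ! (t - s) + s))" for t
    unfolding P_def a_def c_def using bld_nth[OF ll lr _] sn by simp
  have PL1: "t < s \<Longrightarrow> t \<noteq> i0 \<Longrightarrow> P ! t = l ! t \<and> l ! t < s \<and> l ! t \<noteq> a" for t
  proof -
    assume t: "t < s" "t \<noteq> i0"
    have "l ! t \<noteq> s" using linj[of t i0] i0' t by auto
    moreover have "l ! t \<noteq> a" using linj[of t s] las t by auto
    ultimately show ?thesis using Pn[of t] t sn lval[of t] by auto
  qed
  have PL2: "P ! i0 = c" using Pn[of i0] i0 i0' sn by simp
  have PL3: "P ! s = s" using Pn[of s] sn by simp
  have PR1: "s < t \<Longrightarrow> t < n \<Longrightarrow> t \<noteq> s + j0 \<Longrightarrow> P ! t = r ! (t - s) + s \<and> 0 < r ! (t - s) \<and> r ! (t - s) \<noteq> hd r \<and> r ! (t - s) < n - s" for t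
  proof -
    assume t: "s < t" "t < n" "t \<noteq> s + j0"
    have "r ! (t - s) \<noteq> 0"
    proof
      assume "r ! (t - s) = 0"
      then have "t - s = j0" using rinj[of "t - s" j0] j0' t by auto
      then show False using t by auto
    qed
    moreover have "r ! (t - s) \<noteq> hd r"
    proof
      assume "r ! (t - s) = hd r"
      moreover have "t - s < n - s" using t by linarith
      ultimately have "t - s = 0" using rinj[of "t - s" 0] r0 sn by auto
      then show False using t by auto
    qed
    ultimately show ?thesis using Pn[of t] t rval[of "t - s"] by auto
  qed
  have PR2: "P ! (s + j0) = a" using Pn[of "s + j0"] j0 j0' by simp
  have Lcmp: "t < s \<Longrightarrow> u < s \<Longrightarrow> (P ! t < P ! u \<longleftrightarrow> l ! t < l ! u)" for t u
    using PL1[of t] PL1[of u] PL2 i0' c_gt lval[of t] lval[of u] by (cases "t = i0"; cases "u = i0") auto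
  have La: "t < s \<Longrightarrow> (P ! t < a \<longleftrightarrow> l ! t < a) \<and> (a < P ! t \<longleftrightarrow> a < l ! t)" for t
    using PL1[of t] PL2 i0' c_gt a_lt by (cases "t = i0") auto
  have Rcmp: "s < t \<Longrightarrow> t < n \<Longrightarrow> s < u \<Longrightarrow> u < n \<Longrightarrow> (P ! t < P ! u \<longleftrightarrow> r ! (t - s) < r ! (u - s))" for t u
    using PR1[of t] PR1[of u] PR2 j0' a_lt by (cases "t = s + j0"; cases "u = s + j0") auto
  have Rc: "s < t \<Longrightarrow> t < n \<Longrightarrow> (P ! t < c \<longleftrightarrow> r ! (t - s) < r ! 0)" for t
    using PR1[of t] PR2 j0' a_lt c_gt r0 hr unfolding c_def by (cases "t = s + j0") auto
  have AVL: "i < j \<Longrightarrow> j < k \<Longrightarrow> k < Suc s \<Longrightarrow> \<not> (l ! j < l ! i \<and> l ! k < l ! j)" for i j k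
    using avl ll unfolding av_def by auto
  have AVR: "i < j \<Longrightarrow> j < k \<Longrightarrow> k < n - s \<Longrightarrow> \<not> (r ! j < r ! i \<and> r ! k < r ! j)" for i j k
    using avr lr unfolding av_def by auto
  have Pcases: "t < n \<Longrightarrow> (t < s \<and> t \<noteq> i0) \<or> t = i0 \<or> t = s \<or> (s < t \<and> t \<noteq> s + j0) \<or> t = s + j0" for t
    by auto
  have sub: "s < t \<Longrightarrow> t < n \<Longrightarrow> t - s < n - s" for t by linarith
  have dP: "distinct P"
  proof (subst distinct_conv_nth, intro allI impI)
    fix i j assume i: "i < length P" and j: "j < length P" and ij: "i \<noteq> j"
    show "P ! i \<noteq> P ! j"
    proof
      assume eq: "P ! i = P ! j"
      have i': "i < n" and j': "j < n" using i j lP by auto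
      have "i = j"
        using Pcases[OF i'] Pcases[OF j']
      proof (elim disjE conjE)
        qed (use eq PL1[of i] PL1[of j] PL2 PL3 PR1[of i] PR1[of j] PR2 c_gt a_lt linj[of i j] rinj[of "i - s" "j - s"] i' j' i0 sub[of i] sub[of j] c_def in auto)
      then show False using ij by simp
    qed
  qed
  have Pval: "t < n \<Longrightarrow> P ! t < n" for t
    using Pcases[of t] PL1[of t] PL2 PL3 PR1[of t] PR2 c_lt a_lt sn by auto
  have PPL: "P \<in> PL n"
    by (rule PL_I[OF dP lP]) (use Pval lP in \<open>auto simp: in_set_conv_nth\<close>)
  have occ_in: "(i0, s, s + j0) \<in> occ P"
    unfolding occ_def using i0 j0 j0' PL2 PL3 PR2 c_gt a_lt lP by auto
  have occ_sub: "occ P \<subseteq> {(i0, s, s + j0)}"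
  proof
    fix x assume "x \<in> occ P"
    then obtain i j k where x: "x = (i, j, k)" and ij: "i < j" and jk: "j < k" and kn: "k < n"
      and c1: "P ! j < P ! i" and c2: "P ! k < P ! j"
      unfolding occ_def using lP by auto
    have "i = i0 \<and> j = s \<and> k = s + j0"
    proof (cases "j < s")
      case True
      show ?thesis
      proof (cases "j = i0")
        case True
        then show ?thesis using PL1[of i] PL2 c1 ij i0 c_gt by auto
      next
        case False
        have Pj: "P ! j = l ! j" "l ! j < s" using PL1[of j] False \<open>j < s\<close> by auto
        have is': "i < s" using ij \<open>j < s\<close> by simp
        have li: "l ! j < l ! i" using Lcmp[of j i] is' \<open>j < s\<close> c1 by simp
        consider "k < s" | "k = s" | "s < k" "k = s + j0" | "s < k" "k \<noteq> s + j0" by linarith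
        then show ?thesis
        proof cases
          case 1
          then have "l ! k < l ! j" using Lcmp[of k j] \<open>j < s\<close> c2 by simp
          then show ?thesis using AVL[of i j k] ij jk 1 li by simp
        next
          case 2 then show ?thesis using c2 PL3 Pj by simp
        next
          case 3
          then have "a < l ! j" using c2 PR2 La[of j] \<open>j < s\<close> by simp
          then show ?thesis using AVL[of i j s] ij \<open>j < s\<close> li las by simp
        next
          case 4 then show ?thesis using c2 PR1[of k] Pj kn by simp
        qed
      qed
    next
      case False
      show ?thesis
      proof (cases "j = s")
        case True
        have "i = i0" using c1 True PL1[of i] PL3 ij by (cases "i = i0") auto
        moreover have "k = s + j0" using c2 True PR1[of k] PL3 jk kn by (cases "k = s + j0") auto
        ultimately show ?thesis using True by simp
      next
        case False
        then have js: "s < j" using \<open>\<not> j < s\<close> by simp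
        show ?thesis
        proof (cases "j = s + j0")
          case True
          then show ?thesis using c2 PR2 PR1[of k] jk kn a_lt by (cases "k = s + j0") auto
        next
          case False
          have Pj: "P ! j = r ! (j - s) + s" using PR1[of j] js jk kn False by simp
          have rk: "r ! (k - s) < r ! (j - s)" using Rcmp[of k j] c2 js jk kn by simp
          have jks: "j - s < k - s" "k - s < n - s" using js jk kn by linarith+
          consider "i < s" | "i = s" | "s < i" by linarith
          then show ?thesis
          proof cases
            case 1
            have "i = i0" using c1 Pj PL1[of i] 1 by (cases "i = i0") auto
            then have "r ! (j - s) < r ! 0" using Rc[of j] c1 PL2 js jk kn by simp
            then show ?thesis using AVR[of 0 "j - s" "k - s"] rk js jks by simp
          next
            case 2 then show ?thesis using c1 Pj PL3 by simp
          next
            case 3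
            have "r ! (j - s) < r ! (i - s)" using Rcmp[of j i] c1 3 ij js jk kn by simp
            moreover have "i - s < j - s" using 3 ij by linarith
            ultimately show ?thesis using AVR[of "i - s" "j - s" "k - s"] rk jks by simp
          qed
        qed
      qed
    qed
    then show "x \<in> {(i0, s, s + j0)}" using x by simp
  qed
  have "occ P = {(i0, s, s + j0)}" using occ_in occ_sub by auto
  then show ?thesis using PPL PL2 PR2 unfolding P_def c_def a_def by blast
qed

definition Dom :: "nat \<Rightarrow> (nat \<times> nat list \<times> nat list) set" where
  "Dom n = Sigma {1..n - 2} (\<lambda>s. Ln (Suc s) \<times> Rn (n - s))"

lemma bld_recover:
  assumes s1: "1 \<le> s" and sn: "s + 2 \<le> n" and L: "l \<in> Ln (Suc s)" and R: "r \<in> Rn (n - s)"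
  shows "length l = Suc s" "length r = n - s"
    "\<And>t. t < s \<Longrightarrow> l ! t = (if bld s l r ! t = hd r + s then s else bld s l r ! t)"
    "l ! s = last l"
    "r ! 0 = hd r"
    "\<And>t. 0 < t \<Longrightarrow> t < n - s \<Longrightarrow> r ! t = (if bld s l r ! (s + t) = last l then 0 else bld s l r ! (s + t) - s)"
proof -
  have sl: "set l = {0..<Suc s}" and la: "last l \<noteq> s"
    using L by (auto simp: Ln_def AVn_def PL_def)
  show ll: "length l = Suc s" using L PL_length by (auto simp: Ln_def AVn_def)
  have hr: "hd r \<noteq> 0" using R by (auto simp: Rn_def)
  show lr: "length r = n - s" using R PL_length by (auto simp: Rn_def AVn_def)
  have lne: "l \<noteq> []" using ll by auto
  show las: "l ! s = last l" using last_conv_nth[OF lne] ll by simp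
  have "last l \<in> set l" using lne by simp
  then have a_lt: "last l < s" using sl la by auto
  have rne: "r \<noteq> []" using lr sn by auto
  show "r ! 0 = hd r" using rne by (simp add: hd_conv_nth)
  fix t
  show "t < s \<Longrightarrow> l ! t = (if bld s l r ! t = hd r + s then s else bld s l r ! t)"
  proof -
    assume t: "t < s"
    have "l ! t \<in> set l" using t ll by simp
    then have "l ! t \<le> s" using sl by auto
    then show ?thesis using bld_nth[OF ll lr, of t] t sn hr by auto
  qed
  show "0 < t \<Longrightarrow> t < n - s \<Longrightarrow> r ! t = (if bld s l r ! (s + t) = last l then 0 else bld s l r ! (s + t) - s)"
    using bld_nth[OF ll lr, of "s + t"] sn a_lt by auto
qed

lemma bld_inj: "inj_on (\<lambda>(s, l, r). bld s l r) (Dom n)"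
proof (rule inj_onI)
  fix x y assume x0: "x \<in> Dom n" and y0: "y \<in> Dom n"
    and eq0: "(\<lambda>(s, l, r). bld s l r) x = (\<lambda>(s, l, r). bld s l r) y"
  obtain s l r where x: "x = (s, l, r)" by (cases x) auto
  obtain s' l' r' where y: "y = (s', l', r')" by (cases y) auto
  have D1: "(s, l, r) \<in> Dom n" and D2: "(s', l', r') \<in> Dom n" and eq: "bld s l r = bld s' l' r'"
    using x0 y0 eq0 x y by auto
  have h1: "1 \<le> s" "s + 2 \<le> n" "l \<in> Ln (Suc s)" "r \<in> Rn (n - s)" using D1 by (auto simp: Dom_def)
  have h2: "1 \<le> s'" "s' + 2 \<le> n" "l' \<in> Ln (Suc s')" "r' \<in> Rn (n - s')" using D2 by (auto simp: Dom_def)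
  obtain i0 k0 where o1: "occ (bld s l r) = {(i0, s, k0)}" "bld s l r ! i0 = hd r + s" "bld s l r ! k0 = last l"
    using bld_props[OF h1] by blast
  obtain i0' k0' where o2: "occ (bld s' l' r') = {(i0', s', k0')}" "bld s' l' r' ! i0' = hd r' + s'" "bld s' l' r' ! k0' = last l'"
    using bld_props[OF h2] by blast
  have "(i0, s, k0) = (i0', s', k0')" using o1(1) o2(1) eq by simp
  then have ss: "s' = s" "i0' = i0" "k0' = k0" by auto
  have lastl: "last l' = last l" using o1(3) o2(3) eq ss by simp
  have hdr: "hd r' = hd r" using o1(2) o2(2) eq ss by simp
  note R1 = bld_recover[OF h1] and R2 = bld_recover[OF h2, unfolded ss]
  have "l = l'"
  proof (rule nth_equalityI)
    show "length l = length l'" using R1(1) R2(1) by simp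
    fix t assume "t < length l"
    then have "t < Suc s" using R1(1) by simp
    then consider "t < s" | "t = s" by linarith
    then show "l ! t = l' ! t"
    proof cases
      case 1 then show ?thesis using R1(3)[OF 1] R2(3)[OF 1] eq hdr ss by simp
    next
      case 2 then show ?thesis using R1(4) R2(4) lastl by simp
    qed
  qed
  moreover have "r = r'"
  proof (rule nth_equalityI)
    show "length r = length r'" using R1(2) R2(2) by simp
    fix t assume "t < length r"
    then have t: "t < n - s" using R1(2) by simp
    show "r ! t = r' ! t"
    proof (cases "t = 0")
      case True then show ?thesis using R1(5) R2(5) hdr by simp
    next
      case False then show ?thesis using R1(6)[of t] R2(6)[of t] t eq lastl ss by simp
    qed
  qed
  ultimately show "x = y" using ss x y by simp
qed

lemma bld_surj:
  assumes O: "p \<in> On n"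
  shows "\<exists>x \<in> Dom n. p = (\<lambda>(s, l, r). bld s l r) x"
proof -
  have dp: "distinct p" and sp: "set p = {0..<n}" and c1: "card (occ p) = 1"
    using O by (auto simp: On_def PL_def)
  have lp: "length p = n" using O PL_length by (auto simp: On_def)
  obtain i0 s k0 where oc: "occ p = {(i0, s, k0)}" using c1 by (metis card_1_singletonE prod_cases3)
  have "(i0, s, k0) \<in> occ p" using oc by simp
  then have o0: "i0 < s" "s < k0" "k0 < n" "p ! s < p ! i0" "p ! k0 < p ! s"
    using lp unfolding occ_def by auto
  have uniq: "i < j \<Longrightarrow> j < k \<Longrightarrow> k < n \<Longrightarrow> p ! j < p ! i \<Longrightarrow> p ! k < p ! j \<Longrightarrow> i = i0 \<and> j = s \<and> k = k0" for i j k
  proof -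
    assume "i < j" "j < k" "k < n" "p ! j < p ! i" "p ! k < p ! j"
    then have "(i, j, k) \<in> occ p" unfolding occ_def using lp by auto
    then show ?thesis using oc by auto
  qed
  have pinj: "t < n \<Longrightarrow> u < n \<Longrightarrow> p ! t = p ! u \<Longrightarrow> t = u" for t u
    using dp lp by (simp add: nth_eq_iff_index_eq)
  have pval: "t < n \<Longrightarrow> p ! t < n" for t
  proof -
    assume "t < n"
    then have "p ! t \<in> set p" using lp by simp
    then show ?thesis using sp by simp
  qed
  define b where "b = p ! s"
  have F1: "t < s \<Longrightarrow> t \<noteq> i0 \<Longrightarrow> p ! t < b" for t
  proof (rule ccontr)
    assume t: "t < s" "t \<noteq> i0" "\<not> p ! t < b"
    then have "p ! t \<noteq> b" using pinj[of t s] o0 unfolding b_def by auto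
    then have "b < p ! t" using t by simp
    then show False using uniq[of t s k0] t o0 unfolding b_def by auto
  qed
  have F2: "s < t \<Longrightarrow> t < n \<Longrightarrow> t \<noteq> k0 \<Longrightarrow> b < p ! t" for t
  proof (rule ccontr)
    assume t: "s < t" "t < n" "t \<noteq> k0" "\<not> b < p ! t"
    then have "p ! t \<noteq> b" using pinj[of t s] o0 unfolding b_def by auto
    then have "p ! t < b" using t by simp
    then show False using uniq[of i0 s t] t o0 unfolding b_def by auto
  qed
  define S where "S = ({0..<s} - {i0}) \<union> {k0}"
  have imgS: "(\<lambda>t. p ! t) ` S = {0..<b}"
  proof
    show "(\<lambda>t. p ! t) ` S \<subseteq> {0..<b}"
    proof
      fix v assume "v \<in> (\<lambda>t. p ! t) ` S"
      then obtain t where t: "t \<in> S" "v = p ! t" by blast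
      show "v \<in> {0..<b}"
      proof (cases "t = k0")
        case True then show ?thesis using t o0 b_def by simp
      next
        case False then have "t < s" "t \<noteq> i0" using t S_def by auto
        then show ?thesis using F1 t by simp
      qed
    qed
    show "{0..<b} \<subseteq> (\<lambda>t. p ! t) ` S"
    proof
      fix v assume v: "v \<in> {0..<b}"
      have "b < n" unfolding b_def using pval o0 by simp
      then have "v \<in> set p" using v sp by auto
      then obtain t where t: "t < n" "p ! t = v" using lp by (auto simp: in_set_conv_nth)
      have "t \<in> S"
      proof -
        have "t \<noteq> s" using t v unfolding b_def by auto
        moreover have "t \<noteq> i0" using t v o0 unfolding b_def by auto
        moreover have "s < t \<Longrightarrow> t = k0" using F2[of t] t v by auto
        ultimately show ?thesis unfolding S_def using t by (cases "t < s") auto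
      qed
      then show "v \<in> (\<lambda>t. p ! t) ` S" using t by auto
    qed
  qed
  have "inj_on (\<lambda>t. p ! t) S"
    by (rule inj_onI) (use pinj o0 in \<open>auto simp: S_def\<close>)
  then have "card S = b" using card_image[of "\<lambda>t. p ! t" S] imgS by simp
  moreover have "card S = s"
  proof -
    have "card ({0..<s} - {i0}) = s - 1" using o0 by simp
    moreover have "k0 \<notin> {0..<s} - {i0}" using o0 by auto
    ultimately show ?thesis unfolding S_def using o0 by simp
  qed
  ultimately have bs: "b = s" by simp
  define c where "c = p ! i0"
  define a where "a = p ! k0"
  have c_gt: "s < c" using o0 bs unfolding c_def b_def by simp
  have c_lt: "c < n" using pval o0 unfolding c_def by simp
  have a_lt: "a < s" using o0 bs unfolding a_def b_def by simp
  have ps: "p ! s = s" using bs b_def by simp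
  have PL1: "t < s \<Longrightarrow> t \<noteq> i0 \<Longrightarrow> p ! t < s" for t using F1 bs by simp
  have PR1: "s < t \<Longrightarrow> t < n \<Longrightarrow> t \<noteq> k0 \<Longrightarrow> s < p ! t" for t using F2 bs by simp
  define l where "l = map (\<lambda>v. if v = c then s else v) (take s p) @ [a]"
  define r where "r = (c - s) # map (\<lambda>v. if v = a then 0 else v - s) (drop (Suc s) p)"
  have ll: "length l = Suc s" unfolding l_def using lp o0 by simp
  have lr: "length r = n - s" unfolding r_def using lp o0 by simp
  have lnth: "t < s \<Longrightarrow> l ! t = (if t = i0 then s else p ! t)" for t
  proof -
    assume t: "t < s"
    have "l ! t = (if p ! t = c then s else p ! t)" unfolding l_def using t lp o0 by (simp add: nth_append)
    moreover have "p ! t = c \<longleftrightarrow> t = i0" using pinj[of t i0] t o0 unfolding c_def by auto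
    ultimately show ?thesis by simp
  qed
  have lnth_s: "l ! s = a" unfolding l_def using lp o0 by (simp add: nth_append)
  have rnth0: "r ! 0 = c - s" unfolding r_def by simp
  have rnth: "0 < t \<Longrightarrow> t < n - s \<Longrightarrow> r ! t = (if s + t = k0 then 0 else p ! (s + t) - s)" for t
  proof -
    assume t: "0 < t" "t < n - s"
    then obtain t' where t': "t = Suc t'" by (cases t) auto
    have ld: "length (drop (Suc s) p) = n - Suc s" using lp by simp
    have len: "t' < length (drop (Suc s) p)" unfolding ld using t t' by linarith
    have "r ! t = (\<lambda>v. if v = a then 0 else v - s) (drop (Suc s) p ! t')"
      unfolding r_def t' nth_Cons_Suc using nth_map[OF len] by blast
    also have "drop (Suc s) p ! t' = p ! (Suc s + t')" using len by (simp add: nth_drop)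
    finally have "r ! t = (if p ! (Suc s + t') = a then 0 else p ! (Suc s + t') - s)" by simp
    moreover have "p ! (s + t) = a \<longleftrightarrow> s + t = k0" using pinj[of "s + t" k0] t o0(2,3) unfolding a_def by auto
    ultimately show ?thesis using t' by simp
  qed
  have lval: "t < Suc s \<Longrightarrow> l ! t < Suc s" for t
  proof -
    assume t: "t < Suc s"
    show ?thesis
    proof (cases "t < s")
      case True then show ?thesis using lnth[of t] PL1[of t] by (cases "t = i0") auto
    next
      case False then have "t = s" using t by simp
      then show ?thesis using lnth_s a_lt by simp
    qed
  qed
  have ldist: "distinct l"
  proof (subst distinct_conv_nth, intro allI impI)
    fix t u assume t: "t < length l" and u: "u < length l" and tu: "t \<noteq> u"
    have t': "t < Suc s" and u': "u < Suc s" using t u ll by auto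
    show "l ! t \<noteq> l ! u"
    proof
      assume eq: "l ! t = l ! u"
      consider "t < s" "u < s" | "t = s" "u < s" | "t < s" "u = s" | "t = s" "u = s" using t' u' by linarith
      then show False
      proof cases
        case 1 then show ?thesis using eq lnth[of t] lnth[of u] PL1[of t] PL1[of u] pinj[of t u] tu o0
          by (cases "t = i0"; cases "u = i0") auto
      next
        case 2 then show ?thesis using eq lnth[of u] lnth_s a_lt pinj[of u k0] o0 unfolding a_def
          by (cases "u = i0") auto
      next
        case 3 then show ?thesis using eq lnth[of t] lnth_s a_lt pinj[of t k0] o0 unfolding a_def
          by (cases "t = i0") auto
      next
        case 4 then show ?thesis using tu by simp
      qed
    qed
  qed
  have lPL: "l \<in> PL (Suc s)"
    by (rule PL_I[OF ldist ll]) (use lval ll in \<open>auto simp: in_set_conv_nth\<close>)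
  have lfull: "t < Suc s \<Longrightarrow> l ! t = (if t = s then a else if t = i0 then s else p ! t)" for t
    using lnth[of t] lnth_s o0(1) by (cases "t = s") auto
  have pfull: "t < Suc s \<Longrightarrow> t \<noteq> s \<Longrightarrow> t \<noteq> i0 \<Longrightarrow> p ! t < s" for t
    using PL1[of t] by simp
  have lcmp: "t < Suc s \<Longrightarrow> u < Suc s \<Longrightarrow> (l ! t < l ! u \<longleftrightarrow> p ! (if t = s then k0 else t) < p ! (if u = s then k0 else u))" for t u
  proof -
    assume t: "t < Suc s" and u: "u < Suc s"
    have ci: "p ! i0 = c" "p ! k0 = a" unfolding c_def a_def by simp_all
    show ?thesis
      using lfull[OF t] lfull[OF u] pfull[OF t] pfull[OF u] c_gt a_lt ci o0(1)
      by (cases "t = s"; cases "u = s"; cases "t = i0"; cases "u = i0") auto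
  qed
  have lav: "av l"
    unfolding av_def
  proof (intro allI impI notI)
    fix i j k assume ij: "i < j" and jk: "j < k" and k: "k < length l" and c: "l ! j < l ! i \<and> l ! k < l ! j"
    have k': "k < Suc s" using k ll by simp
    let ?e = "\<lambda>t. if t = s then k0 else t"
    have "?e i < ?e j" "?e j < ?e k" "?e k < n" using ij jk k' o0 by auto
    moreover have "p ! ?e j < p ! ?e i" "p ! ?e k < p ! ?e j"
      using c lcmp[of j i] lcmp[of k j] ij jk k' by auto
    ultimately have "?e j = s" using uniq[of "?e i" "?e j" "?e k"] by blast
    then show False using ij jk k' by (auto split: if_splits)
  qed
  have lL: "l \<in> Ln (Suc s)"
  proof -
    have "last l = a" unfolding l_def by simp
    then show ?thesis using lPL lav a_lt by (simp add: Ln_def AVn_def)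
  qed
  have rval: "t < n - s \<Longrightarrow> r ! t < n - s" for t
  proof -
    assume t: "t < n - s"
    show ?thesis
    proof (cases "t = 0")
      case True then show ?thesis using rnth0 c_gt c_lt by simp
    next
      case False
      have st: "s + t < n" using t by linarith
      show ?thesis
      proof (cases "s + t = k0")
        case True then show ?thesis using rnth[of t] False t by simp
      next
        case F: False
        then have "r ! t = p ! (s + t) - s" "s < p ! (s + t)" "p ! (s + t) < n"
          using rnth[of t] False t pval[OF st] PR1[of "s + t"] st by auto
        then show ?thesis by linarith
      qed
    qed
  qed
  have rpos: "0 < t \<Longrightarrow> t < n - s \<Longrightarrow> s + t \<noteq> k0 \<Longrightarrow> r ! t = p ! (s + t) - s \<and> s < p ! (s + t)" for t
    using rnth[of t] PR1[of "s + t"] by auto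
  have rdist: "distinct r"
  proof (subst distinct_conv_nth, intro allI impI)
    fix t u assume t: "t < length r" and u: "u < length r" and tu: "t \<noteq> u"
    have t': "t < n - s" and u': "u < n - s" using t u lr by auto
    show "r ! t \<noteq> r ! u"
    proof
      assume eq: "r ! t = r ! u"
      have A: "0 < v \<Longrightarrow> v < n - s \<Longrightarrow> s + v \<noteq> k0 \<Longrightarrow> p ! (s + v) \<noteq> c" for v
      proof -
        assume v: "0 < v" "v < n - s" "s + v \<noteq> k0"
        have "s + v < n" using v by linarith
        then show ?thesis using pinj[of "s + v" i0] o0(1,3) unfolding c_def by auto
      qed
      consider "t = 0" "u = 0" | "t = 0" "0 < u" | "0 < t" "u = 0" | "0 < t" "0 < u" by linarith
      then show False
      proof cases
        case 1 then show ?thesis using tu by simp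
      next
        case 2 then show ?thesis using eq rnth0 rnth[of u] rpos[of u] A[of u] u' c_gt
          by (cases "s + u = k0") auto
      next
        case 3 then show ?thesis using eq rnth0 rnth[of t] rpos[of t] A[of t] t' c_gt
          by (cases "s + t = k0") auto
      next
        case 4
        have "s + t < n" "s + u < n" using t' u' by linarith+
        moreover have dinj: "\<And>x y. s < x \<Longrightarrow> s < y \<Longrightarrow> x - s = y - s \<Longrightarrow> x = y" by arith
        ultimately show ?thesis using eq rnth[of t] rnth[of u] rpos[of t] rpos[of u] pinj[of "s + t" "s + u"] tu t' u' 4
          by (cases "s + t = k0"; cases "s + u = k0") auto
      qed
    qed
  qed
  have rPL: "r \<in> PL (n - s)"
    by (rule PL_I[OF rdist lr]) (use rval lr in \<open>auto simp: in_set_conv_nth\<close>)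
  have rcmp: "t < n - s \<Longrightarrow> u < n - s \<Longrightarrow> (r ! t < r ! u \<longleftrightarrow> p ! (if t = 0 then i0 else s + t) < p ! (if u = 0 then i0 else s + u))" for t u
  proof -
    assume t: "t < n - s" and u: "u < n - s"
    have st: "0 < t \<Longrightarrow> s + t < n" "0 < u \<Longrightarrow> s + u < n" using t u by linarith+
    show ?thesis
      using rnth0 rnth[of t] rnth[of u] rpos[of t] rpos[of u] t u c_gt a_lt st unfolding c_def a_def
      by (cases "t = 0"; cases "u = 0"; cases "s + t = k0"; cases "s + u = k0") auto
  qed
  have rav: "av r"
    unfolding av_def
  proof (intro allI impI notI)
    fix i j k assume ij: "i < j" and jk: "j < k" and k: "k < length r" and c: "r ! j < r ! i \<and> r ! k < r ! j"
    have k': "k < n - s" using k lr by simp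
    let ?e = "\<lambda>t. if t = 0 then i0 else s + t"
    have "?e i < ?e j" "?e j < ?e k" "?e k < n" using ij jk k' o0 by auto
    moreover have "p ! ?e j < p ! ?e i" "p ! ?e k < p ! ?e j"
      using c rcmp[of j i] rcmp[of k j] ij jk k' by auto
    ultimately have "?e j = s" using uniq[of "?e i" "?e j" "?e k"] by blast
    then show False using ij jk k' by (auto split: if_splits)
  qed
  have rR: "r \<in> Rn (n - s)"
    using rPL rav c_gt unfolding r_def by (simp add: Rn_def AVn_def)
  have sD: "s \<in> {1..n - 2}" using o0 by auto
  have "bld s l r = p"
  proof (rule nth_equalityI)
    show "length (bld s l r) = length p" using bld_length[OF ll lr] o0 lp by simp
    fix t assume "t < length (bld s l r)"
    then have t: "t < n" using bld_length[OF ll lr] o0 by simp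
    have hr: "hd r = c - s" unfolding r_def by simp
    have la: "last l = a" unfolding l_def by simp
    have e: "bld s l r ! t = (if t < s then (if l ! t = s then hd r + s else l ! t)
                          else if t = s then s
                          else (if r ! (t - s) = 0 then last l else r ! (t - s) + s))"
      using bld_nth[OF ll lr _ t] o0 by simp
    consider "t < s" | "t = s" | "s < t" by linarith
    then show "bld s l r ! t = p ! t"
    proof cases
      case 1 then show ?thesis using e lnth[of t] PL1[of t] hr c_gt unfolding c_def by (cases "t = i0") auto
    next
      case 2 then show ?thesis using e ps by simp
    next
      case 3
      have "0 < t - s" "t - s < n - s" using 3 t by linarith+
      then show ?thesis using e rnth[of "t - s"] rpos[of "t - s"] la 3 unfolding a_def
        by (cases "t = k0") auto
    qed
  qed
  then show ?thesis using sD lL rR unfolding Dom_def by force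
qed

lemma finite_Ln: "finite (Ln k)" unfolding Ln_def using finite_AVn by simp
lemma finite_Rn: "finite (Rn k)" unfolding Rn_def using finite_AVn by simp

lemma card_On: "card (On n) = (\<Sum>s\<in>{1..n - 2}. card (Ln (Suc s)) * card (Rn (n - s)))"
proof -
  let ?f = "\<lambda>(s, l, r). bld s l r"
  have bij: "bij_betw ?f (Dom n) (On n)"
    unfolding bij_betw_def
  proof
    show "inj_on ?f (Dom n)" by (rule bld_inj)
    show "?f ` Dom n = On n"
    proof
      show "?f ` Dom n \<subseteq> On n"
      proof
        fix p assume "p \<in> ?f ` Dom n"
        then obtain s l r where x: "(s, l, r) \<in> Dom n" "p = bld s l r" by auto
        have h: "1 \<le> s" "s + 2 \<le> n" "l \<in> Ln (Suc s)" "r \<in> Rn (n - s)" using x(1) by (auto simp: Dom_def)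
        obtain i0 k0 where "occ (bld s l r) = {(i0, s, k0)}" using bld_props[OF h] by blast
        then show "p \<in> On n" using bld_props[OF h] x(2) by (simp add: On_def)
      qed
      show "On n \<subseteq> ?f ` Dom n"
      proof
        fix p assume "p \<in> On n"
        then obtain x where "x \<in> Dom n" "p = ?f x" using bld_surj by blast
        then show "p \<in> ?f ` Dom n" by blast
      qed
    qed
  qed
  have "card (On n) = card (Dom n)" using bij_betw_same_card[OF bij] by simp
  also have "\<dots> = (\<Sum>s\<in>{1..n - 2}. card (Ln (Suc s) \<times> Rn (n - s)))"
    unfolding Dom_def by (rule card_SigmaI) (auto intro: finite_cartesian_product finite_Ln finite_Rn)
  also have "\<dots> = (\<Sum>s\<in>{1..n - 2}. card (Ln (Suc s)) * card (Rn (n - s)))"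
    by (simp add: card_cartesian_product)
  finally show ?thesis .
qed

lemma card_On_small: "n < 3 \<Longrightarrow> card (On n) = 0"
proof -
  assume "n < 3"
  then have "{1..n - 2} = ({} :: nat set)" by auto
  then show ?thesis using card_On[of n] by simp
qed

lemma card_On_big:
  assumes "3 \<le> n"
  shows "2 * n * card (On n) = 6 * ((2 * n) choose (n - 3))"
proof -
  obtain m where n: "n = m + 3" using assms by (metis add.commute le_Suc_ex)
  have "card (On n) = (\<Sum>s\<in>{Suc 0..Suc m}. card (Ln (Suc s)) * card (Rn (n - s)))"
    using card_On[of n] n by (simp add: numeral_3_eq_3)
  also have "\<dots> = (\<Sum>i=0..m. card (Ln (Suc (Suc i))) * card (Rn (n - Suc i)))"
    by (rule sum.shift_bounds_cl_Suc_ivl)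
  also have "\<dots> = (\<Sum>i=0..m. T 3 i * T 3 (m - i))"
  proof (rule sum.cong)
    fix i assume "i \<in> {0..m}"
    then have "n - Suc i = Suc (Suc (m - i))" using n by auto
    then show "card (Ln (Suc (Suc i))) * card (Rn (n - Suc i)) = T 3 i * T 3 (m - i)"
      using card_Ln_T[of i] card_Rn_T[of "m - i"] by simp
  qed simp
  also have "\<dots> = T 6 m" using T_conv[of 3 3 m] by simp
  finally have cO: "card (On n) = T 6 m" .
  have "(2 * m + 6) * T 6 m = 6 * ((2 * m + 6) choose m)" using T_closed[of m 6] by simp
  then show ?thesis using cO n by (simp add: algebra_simps)
qed

definition phi :: "nat \<Rightarrow> (nat \<Rightarrow> nat) \<Rightarrow> nat list" where
  "phi n p = map (\<lambda>i. p (Suc i) - 1) [0..<n]"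

lemma phi_nth: "i < n \<Longrightarrow> phi n p ! i = p (Suc i) - 1"
  unfolding phi_def by simp

lemma phi_length: "length (phi n p) = n" unfolding phi_def by simp

lemma perm_range: "p permutes {1..n} \<Longrightarrow> i < n \<Longrightarrow> 1 \<le> p (Suc i) \<and> p (Suc i) \<le> n"
proof -
  assume p: "p permutes {1..n}" and i: "i < n"
  have "Suc i \<in> {1..n}" using i by simp
  then have "p (Suc i) \<in> {1..n}" using permutes_in_image[OF p] by simp
  then show ?thesis by simp
qed

lemma phi_PL: "p permutes {1..n} \<Longrightarrow> phi n p \<in> PL n"
proof -
  assume p: "p permutes {1..n}"
  have d: "distinct (phi n p)"
  proof (subst distinct_conv_nth, intro allI impI)
    fix i j assume i: "i < length (phi n p)" and j: "j < length (phi n p)" and ij: "i \<noteq> j"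
    have i': "i < n" and j': "j < n" using i j phi_length by auto
    show "phi n p ! i \<noteq> phi n p ! j"
    proof
      assume "phi n p ! i = phi n p ! j"
      then have "p (Suc i) - 1 = p (Suc j) - 1" using phi_nth i' j' by simp
      then have "p (Suc i) = p (Suc j)" using perm_range[OF p i'] perm_range[OF p j'] by arith
      then have "Suc i = Suc j" using permutes_inj[OF p] by (simp add: inj_eq)
      then show False using ij by simp
    qed
  qed
  show ?thesis
  proof (rule PL_I[OF d phi_length])
    show "\<forall>x\<in>set (phi n p). x < n"
    proof
      fix x assume "x \<in> set (phi n p)"
      then obtain i where i: "i < n" "x = phi n p ! i" using phi_length by (auto simp: in_set_conv_nth)
      moreover have "1 \<le> p (Suc i) \<and> p (Suc i) \<le> n" using perm_range[OF p i(1)] .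
      ultimately show "x < n" using phi_nth[OF i(1)] by arith
    qed
  qed
qed

lemma phi_occ:
  assumes p: "p permutes {1..n}"
  shows "card (occ321 n p) = card (occ (phi n p))"
proof -
  let ?g = "\<lambda>(i, j, k). (Suc i, Suc j, Suc k)"
  have cmp: "i < n \<Longrightarrow> j < n \<Longrightarrow> (phi n p ! i < phi n p ! j \<longleftrightarrow> p (Suc i) < p (Suc j))" for i j
    using phi_nth perm_range[OF p, of i] perm_range[OF p, of j] by auto
  have "occ321 n p = ?g ` occ (phi n p)"
  proof
    show "occ321 n p \<subseteq> ?g ` occ (phi n p)"
    proof
      fix x assume "x \<in> occ321 n p"
      then obtain i j k where x: "x = (i, j, k)" "1 \<le> i" "i < j" "j < k" "k \<le> n" "p j < p i" "p k < p j"
        unfolding occ321_def by auto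
      have "(i - 1, j - 1, k - 1) \<in> occ (phi n p)"
        unfolding occ_def using x cmp[of "j - 1" "i - 1"] cmp[of "k - 1" "j - 1"] phi_length by auto
      moreover have "x = ?g (i - 1, j - 1, k - 1)" using x by auto
      ultimately show "x \<in> ?g ` occ (phi n p)" by blast
    qed
    show "?g ` occ (phi n p) \<subseteq> occ321 n p"
    proof
      fix x assume "x \<in> ?g ` occ (phi n p)"
      then obtain i j k where x: "x = (Suc i, Suc j, Suc k)" and o: "(i, j, k) \<in> occ (phi n p)" by auto
      then have "i < j" "j < k" "k < n" "phi n p ! j < phi n p ! i" "phi n p ! k < phi n p ! j"
        unfolding occ_def using phi_length by auto
      then show "x \<in> occ321 n p" unfolding occ321_def using x cmp[of j i] cmp[of k j] by auto
    qed
  qed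
  moreover have "inj_on ?g (occ (phi n p))" by (rule inj_onI) auto
  ultimately show ?thesis by (simp add: card_image)
qed

lemma phi_inj: "inj_on (phi n) {p. p permutes {1..n}}"
proof (rule inj_onI)
  fix p q assume p: "p \<in> {p. p permutes {1..n}}" and q: "q \<in> {p. p permutes {1..n}}" and e: "phi n p = phi n q"
  have p': "p permutes {1..n}" and q': "q permutes {1..n}" using p q by auto
  show "p = q"
  proof
    fix x
    show "p x = q x"
    proof (cases "x \<in> {1..n}")
      case True
      define i where "i = x - 1"
      have i: "i < n" "x = Suc i" using True unfolding i_def by auto
      have "p (Suc i) - 1 = q (Suc i) - 1" using e phi_nth[OF i(1), of p] phi_nth[OF i(1), of q] by simp
      then have "p (Suc i) = q (Suc i)" using perm_range[OF p' i(1)] perm_range[OF q' i(1)] by arith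
      then show ?thesis using i(2) by simp
    next
      case False
      then show ?thesis using permutes_not_in[OF p'] permutes_not_in[OF q'] by simp
    qed
  qed
qed

lemma phi_surj:
  assumes xs: "xs \<in> PL n"
  shows "\<exists>p. p permutes {1..n} \<and> phi n p = xs"
proof -
  have d: "distinct xs" and sx: "set xs = {0..<n}" using xs by (auto simp: PL_def)
  have lx: "length xs = n" using PL_length[OF xs] .
  let ?f = "\<lambda>x. Suc (xs ! (x - 1))"
  have bij: "bij_betw ?f {1..n} {1..n}"
  proof (rule bij_betw_imageI)
    show "inj_on ?f {1..n}"
    proof (rule inj_onI)
      fix x y assume x: "x \<in> {1..n}" and y: "y \<in> {1..n}" and e: "?f x = ?f y"
      then have "xs ! (x - 1) = xs ! (y - 1)" by simp
      moreover have "x - 1 < length xs" "y - 1 < length xs" using x y lx by auto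
      ultimately have "x - 1 = y - 1" using d nth_eq_iff_index_eq by blast
      then show "x = y" using x y by arith
    qed
    show "?f ` {1..n} = {1..n}"
    proof
      show "?f ` {1..n} \<subseteq> {1..n}"
      proof
        fix y assume "y \<in> ?f ` {1..n}"
        then obtain x where x: "x \<in> {1..n}" "y = ?f x" by blast
        have "x - 1 < length xs" using x lx by auto
        then have "xs ! (x - 1) \<in> set xs" by (rule nth_mem)
        then have "xs ! (x - 1) < n" using sx by simp
        then show "y \<in> {1..n}" using x(2) by simp
      qed
      show "{1..n} \<subseteq> ?f ` {1..n}"
      proof
        fix y assume y: "y \<in> {1..n}"
        then have "y - 1 \<in> set xs" using sx by auto
        then obtain i where i: "i < n" "xs ! i = y - 1" using lx by (auto simp: in_set_conv_nth)
        then have "y = ?f (Suc i)" using y by simp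
        moreover have "Suc i \<in> {1..n}" using i by simp
        ultimately show "y \<in> ?f ` {1..n}" by blast
      qed
    qed
  qed
  define p where "p = restrict_id ?f {1..n}"
  have pp: "p permutes {1..n}" unfolding p_def by (rule permutes_restrict_id[OF bij])
  have "phi n p = xs"
  proof (rule nth_equalityI)
    show "length (phi n p) = length xs" using phi_length lx by simp
    fix i assume "i < length (phi n p)"
    then have i: "i < n" using phi_length by simp
    then show "phi n p ! i = xs ! i" using phi_nth[OF i] unfolding p_def restrict_id_def by simp
  qed
  then show ?thesis using pp by blast
qed

lemma card_perm_On: "card {p. p permutes {1..n} \<and> card (occ321 n p) = 1} = card (On n)"
proof -
  let ?S = "{p. p permutes {1..n} \<and> card (occ321 n p) = 1}"
  have "inj_on (phi n) ?S" using phi_inj by (rule inj_on_subset) auto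
  moreover have "phi n ` ?S = On n"
  proof
    show "phi n ` ?S \<subseteq> On n" using phi_PL phi_occ by (auto simp: On_def)
    show "On n \<subseteq> phi n ` ?S"
    proof
      fix xs assume xs: "xs \<in> On n"
      then have "xs \<in> PL n" by (simp add: On_def)
      then obtain p where p: "p permutes {1..n}" "phi n p = xs" using phi_surj by blast
      then have "card (occ321 n p) = 1" using phi_occ[OF p(1)] xs by (simp add: On_def)
      then show "xs \<in> phi n ` ?S" using p by blast
    qed
  qed
  ultimately show ?thesis using card_image by fastforce
qed

theorem mainTheorem1:
  fixes n :: nat
  assumes "n \<ge> 1"
  shows "real (card {p. p permutes {1..n} \<and> card (occ321 n p) = 1})
         = (if n < 3 then 0 else 3 / real n * real ((2 * n) choose (n + 3)))"
proof (cases "n < 3")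
  case True
  then show ?thesis using card_perm_On card_On_small by simp
next
  case False
  then have n3: "3 \<le> n" by simp
  have e: "2 * n * card (On n) = 6 * ((2 * n) choose (n - 3))" using card_On_big[OF n3] .
  have sym: "(2 * n) choose (n - 3) = (2 * n) choose (n + 3)"
    using binomial_symmetric[of "n + 3" "2 * n"] n3 by (simp add: numeral_3_eq_3)
  have nat_eq: "n * card (On n) = 3 * ((2 * n) choose (n + 3))" using e sym by simp
  have "real (n * card (On n)) = real (3 * ((2 * n) choose (n + 3)))"
    using nat_eq by (rule arg_cong)
  then have "real n * real (card (On n)) = 3 * real ((2 * n) choose (n + 3))"
    by (simp only: of_nat_mult of_nat_numeral)
  then have "real (card (On n)) = 3 / real n * real ((2 * n) choose (n + 3))"
    using n3 by (simp add: field_simps)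
  then show ?thesis using card_perm_On False by simp
qed

end
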